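(* Let $p_1,p_2\ge 0$ with $p_1+p_2\le 1$, and for $(x,p)\in\mathbb{R}^2$ put $r^2=x^2+p^2$ and $$W(x,p)=\frac{1}{\pi}e^{-r^2}\Big[(1-p_1-p_2)-p_1\,(1-2r^2)+p_2\,(1-4r^2+2r^4)\Big].$$ This is the Wigner function of the state $\rho=(1-p_1-p_2)|0\rangle\langle 0|+p_1|1\rangle\langle 1|+p_2|2\rangle\langle 2|$. Let $W_0(x,p)=\frac1\pi e^{-(x^2+p^2)}$ be the Wigner function of the vacuum. If $W(x,p)\ge 0$ for all $(x,p)\in\mathbb{R}^2$, then $W_0\succ W$.
   Context: Majorization: for nonnegative integrable functions $f,g$ on a domain $\mathcal{A}$ ($\mathcal{A}=\mathbb{R}^n$ or $\mathbb{R}_+$, with Lebesgue measure), $f\succ g$ ("$f$ majorizes $g$") means $\int_{\mathcal{A}} f=\int_{\mathcal{A}} g$ and $\int_{\mathcal{A}}[f(\mathbf r)-t]_+\,d\mathbf r\ge\int_{\mathcal{A}}[g(\mathbf r)-t]_+\,d\mathbf r$ for all $t\ge 0$, where $[z]_+=\max(z,0)$. (Equivalently, $\int_{\|\mathbf r\|\le s}f^\downarrow\ge\int_{\|\mathbf r\|\le s}g^\downarrow$ for all $s\ge0$, with $f^\downarrow$ the radially decreasing rearrangement of $f$.) Fock-state Wigner functions are $W_n(x,p)=\frac{(-1)^n}{\pi}L_n(2r^2)e^{-r^2}$ with $L_n$ the Laguerre polynomials, so $L_1(u)=1-u$, $L_2(u)=1-2u+u^2/2$. *)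

theory Defs
  imports "HOL-Analysis.Analysis"
begin

definition majorizes :: "(real \<times> real \<Rightarrow> real) \<Rightarrow> (real \<times> real \<Rightarrow> real) \<Rightarrow> bool" where
  "majorizes f g \<longleftrightarrow>
     (\<forall>z. f z \<ge> 0) \<and> (\<forall>z. g z \<ge> 0) \<and>
     integrable lborel f \<and> integrable lborel g \<and>
     integral\<^sup>L lborel f = integral\<^sup>L lborel g \<and>
     (\<forall>t::real. t \<ge> 0 \<longrightarrow>
        integral\<^sup>L lborel (\<lambda>z. max (f z - t) 0) \<ge> integral\<^sup>L lborel (\<lambda>z. max (g z - t) 0))"

definition W0 :: "real \<times> real \<Rightarrow> real" where
  "W0 = (\<lambda>(x, p). (1 / pi) * exp (- (x\<^sup>2 + p\<^sup>2)))"

definition Wmix :: "real \<Rightarrow> real \<Rightarrow> real \<times> real \<Rightarrow> real" where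
  "Wmix p1 p2 = (\<lambda>(x, p). let r2 = x\<^sup>2 + p\<^sup>2 in
     (1 / pi) * exp (- r2) *
       ((1 - p1 - p2) - p1 * (1 - 2 * r2) + p2 * (1 - 4 * r2 + 2 * r2\<^sup>2)))"

end

theory Submission
  imports Defs "HOL-Real_Asymp.Real_Asymp"
begin

definition S2 :: "real \<times> real \<Rightarrow> real" where "S2 z = fst z ^ 2 + snd z ^ 2"

lemma S2_meas[measurable]: "S2 \<in> borel_measurable borel"
  unfolding S2_def by (intro borel_measurable_continuous_onI) (auto intro!: continuous_intros)

lemma ball_vol2: "r \<ge> 0 \<Longrightarrow> emeasure lborel (ball (0::real\<times>real) r) = ennreal (pi * r^2)"
  by (simp add: emeasure_ball eval_unit_ball_vol power2_eq_square)

lemma S2_set: "a > 0 \<Longrightarrow> S2 -` {..<a} = ball (0::real\<times>real) (sqrt a)"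
proof -
  assume a: "a > 0"
  have "S2 z < a \<longleftrightarrow> norm z < sqrt a" for z
    unfolding S2_def norm_prod_def using a
    by (simp add: real_sqrt_less_iff)
  then show ?thesis by (auto simp: mem_ball dist_0_norm)
qed

lemma emeas_S2_lt: "emeasure lborel (S2 -` {..<a}) = ennreal (pi * max a 0)"
proof (cases "a > 0")
  case True
  then show ?thesis using S2_set[OF True] ball_vol2[of "sqrt a"] by (simp add: max_def)
next
  case False
  then have "S2 -` {..<a} = {}" unfolding S2_def
    by (auto simp: not_less) (smt (verit) zero_le_power2)
  with False show ?thesis by (simp add: max_def)
qed

lemma emeas_dens_lt: "emeasure (density lborel (\<lambda>u::real. ennreal pi * indicator {0..} u)) {..<a} = ennreal (pi * max a 0)"
proof -
  have "emeasure (density lborel (\<lambda>u::real. ennreal pi * indicator {0..} u)) {..<a}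
     = (\<integral>\<^sup>+ u. ennreal pi * indicator {0..<a} u \<partial>lborel)"
    by (subst emeasure_density) (auto intro!: nn_integral_cong split: split_indicator)
  also have "\<dots> = ennreal pi * emeasure lborel {0..<a}"
    by (rule nn_integral_cmult_indicator) simp
  also have "\<dots> = ennreal (pi * max a 0)"
    by (cases "a > 0") (auto simp: ennreal_mult max_def)
  finally show ?thesis .
qed

lemma sets_borel_Iio: "sets (borel::real measure) = sigma_sets UNIV (range lessThan)"
  by (subst borel_Iio) simp

lemma distr_S2: "distr lborel borel S2 = density lborel (\<lambda>u::real. ennreal pi * indicator {0..} u)"
proof (rule measure_eqI_generator_eq[where E="range lessThan" and \<Omega>=UNIV and A="\<lambda>i. {..<real i}"])
  show "Int_stable (range lessThan :: real set set)"
  proof (clarsimp simp: Int_stable_def)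
    fix a b :: real
    have "{..<a} \<inter> {..<b} = {..<min a b}" by auto
    then show "{..<a} \<inter> {..<b} \<in> range lessThan" by simp
  qed
  show "range lessThan \<subseteq> Pow (UNIV::real set)" by auto
  show "emeasure (distr lborel borel S2) X = emeasure (density lborel (\<lambda>u::real. ennreal pi * indicator {0..} u)) X"
    if "X \<in> range lessThan" for X
    using that by (auto simp: emeasure_distr emeas_S2_lt emeas_dens_lt)
  show "sets (distr lborel borel S2) = sigma_sets UNIV (range lessThan)"
    by (simp add: borel_Iio)
  show "sets (density lborel (\<lambda>u::real. ennreal pi * indicator {0..} u)) = sigma_sets UNIV (range lessThan)"
    using sets_borel_Iio by simp
  show "range (\<lambda>i. {..<real i}) \<subseteq> range lessThan" by auto
  show "(\<Union>i. {..<real i}) = UNIV"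
    by (auto intro: reals_Archimedean2)
  show "emeasure (distr lborel borel S2) {..<real i} \<noteq> \<infinity>" for i
    by (simp add: emeasure_distr emeas_S2_lt)
qed

lemma nn_radial:
  assumes [measurable]: "g \<in> borel_measurable borel"
  shows "(\<integral>\<^sup>+z. g (S2 z) \<partial>lborel) = (\<integral>\<^sup>+u. ennreal pi * indicator {0..} u * g u \<partial>lborel)"
proof -
  have "(\<integral>\<^sup>+z. g (S2 z) \<partial>lborel) = (\<integral>\<^sup>+u. g u \<partial>(distr lborel borel S2))"
    by (subst nn_integral_distr) auto
  also have "\<dots> = (\<integral>\<^sup>+u. ennreal pi * indicator {0..} u * g u \<partial>lborel)"
    unfolding distr_S2 by (subst nn_integral_density) auto
  finally show ?thesis .
qed

definition Phi :: "real \<Rightarrow> real \<Rightarrow> real" where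
  "Phi s x = (if x \<le> s then s - s * ln s else x - s * ln x)"

lemma DERIV_Phi:
  assumes s: "s > 0" and x: "x > 0"
  shows "DERIV (Phi s) x :> max 0 (1 - s / x)"
proof -
  consider "x < s" | "x > s" | "x = s" by linarith
  then show ?thesis
  proof cases
    case 1
    have ev: "eventually (\<lambda>y. Phi s y = s - s * ln s) (nhds x)"
      using eventually_nhds_in_open[of "{..<s}" x] 1 by (auto elim!: eventually_mono simp: Phi_def)
    have "max 0 (1 - s / x) = 0" using 1 x by (simp add: field_simps)
    moreover have "DERIV (\<lambda>y. s - s * ln s) x :> 0" by (rule derivative_eq_intros) auto
    ultimately show ?thesis using DERIV_cong_ev[OF refl ev refl] by simp
  next
    case 2
    have ev: "eventually (\<lambda>y. Phi s y = y - s * ln y) (nhds x)"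
      using eventually_nhds_in_open[of "{s<..}" x] 2 by (auto elim!: eventually_mono simp: Phi_def)
    have "max 0 (1 - s / x) = 1 - s / x" using 2 x by (simp add: field_simps)
    moreover have "DERIV (\<lambda>y. y - s * ln y) x :> 1 - s * (1 / x)"
      using x by (auto intro!: derivative_eq_intros)
    ultimately show ?thesis using DERIV_cong_ev[OF refl ev refl] by simp
  next
    case 3
    have d: "DERIV (\<lambda>y. y - s * ln y) s :> 1 - s * (1 / s)"
      using s by (auto intro!: derivative_eq_intros)
    hence d0: "((\<lambda>y. ((y - s * ln y) - (s - s * ln s)) / (y - s)) \<longlongrightarrow> 0) (at s)"
      using s by (simp add: has_field_derivative_iff)
    have L: "((\<lambda>y. (Phi s y - Phi s s) / (y - s)) \<longlongrightarrow> 0) (at_left s)"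
    proof (rule tendsto_eventually)
      show "eventually (\<lambda>y. (Phi s y - Phi s s) / (y - s) = 0) (at_left s)"
        unfolding eventually_at_left_field by (auto intro!: exI[of _ "s - 1"] simp: Phi_def)
    qed
    have R: "((\<lambda>y. (Phi s y - Phi s s) / (y - s)) \<longlongrightarrow> 0) (at_right s)"
    proof -
      have A: "((\<lambda>y. ((y - s * ln y) - (s - s * ln s)) / (y - s)) \<longlongrightarrow> 0) (at_right s)"
        using d0 by (rule filterlim_mono) (auto simp: at_le)
      have E: "eventually (\<lambda>y. ((y - s * ln y) - (s - s * ln s)) / (y - s) = (Phi s y - Phi s s) / (y - s)) (at_right s)"
        unfolding eventually_at_right_field by (auto intro!: exI[of _ "s + 1"] simp: Phi_def)
      show ?thesis using A tendsto_cong[OF E] by simp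
    qed
    have "max 0 (1 - s / x) = 0" using 3 s by simp
    moreover have "DERIV (Phi s) s :> 0"
      unfolding has_field_derivative_iff using L R by (simp add: filterlim_at_split)
    ultimately show ?thesis using 3 by simp
  qed
qed

definition qf :: "real \<Rightarrow> real \<Rightarrow> real \<Rightarrow> real" where
  "qf p1 p2 u = (1 - p1 - p2) - p1 * (1 - 2 * u) + p2 * (1 - 4 * u + 2 * u\<^sup>2)"
definition Gf :: "real \<Rightarrow> real \<Rightarrow> real \<Rightarrow> real" where
  "Gf p1 p2 u = exp (- u) * qf p1 p2 u"
definition Tf :: "real \<Rightarrow> real \<Rightarrow> real \<Rightarrow> real" where
  "Tf p1 p2 u = exp (- u) * (1 + 2 * p1 * u + 2 * p2 * u\<^sup>2)"

lemma Wmix_eq: "Wmix p1 p2 z = (1 / pi) * Gf p1 p2 (S2 z)"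
  by (cases z) (simp add: Wmix_def Gf_def qf_def S2_def Let_def)

lemma W0_eq: "W0 z = (1 / pi) * Gf 0 0 (S2 z)"
  by (cases z) (simp add: W0_def Gf_def qf_def S2_def)

lemma Gf_meas[measurable]: "Gf p1 p2 \<in> borel_measurable borel"
  unfolding Gf_def qf_def by measurable

lemma Tf_meas[measurable]: "Tf p1 p2 \<in> borel_measurable borel"
  unfolding Tf_def by measurable

lemma DERIV_Tf: "DERIV (Tf p1 p2) u :> - Gf p1 p2 u"
proof -
  have "DERIV (Tf p1 p2) u :> exp (- u) * (- 1) * (1 + 2 * p1 * u + 2 * p2 * u\<^sup>2) + exp (- u) * (2 * p1 + 2 * p2 * (2 * u))"
    unfolding Tf_def by (auto intro!: derivative_eq_intros)
  moreover have "exp (- u) * (- 1) * (1 + 2 * p1 * u + 2 * p2 * u\<^sup>2) + exp (- u) * (2 * p1 + 2 * p2 * (2 * u)) = - Gf p1 p2 u"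
    unfolding Gf_def qf_def by (simp add: algebra_simps power2_eq_square)
  ultimately show ?thesis by simp
qed

lemma Tf_pos: "p1 \<ge> 0 \<Longrightarrow> p2 \<ge> 0 \<Longrightarrow> u \<ge> 0 \<Longrightarrow> Tf p1 p2 u > 0"
  unfolding Tf_def by (intro mult_pos_pos) (auto intro!: add_pos_nonneg mult_nonneg_nonneg)

lemma Gf_le_Tf: "p1 \<ge> 0 \<Longrightarrow> p2 \<ge> 0 \<Longrightarrow> u \<ge> 0 \<Longrightarrow> Gf p1 p2 u \<le> Tf p1 p2 u"
  unfolding Tf_def Gf_def qf_def
  by (intro mult_left_mono) (auto simp: algebra_simps)

lemma Tf_0: "Tf p1 p2 0 = 1" by (simp add: Tf_def)

lemma G00: "Gf 0 0 u = Tf 0 0 u" by (simp add: Tf_def Gf_def qf_def)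

lemma Tf_lim: "(Tf p1 p2 \<longlongrightarrow> 0) at_top"
proof -
  have a: "((\<lambda>u::real. exp (- u)) \<longlongrightarrow> 0) at_top" by real_asymp
  have b: "((\<lambda>u::real. u * exp (- u)) \<longlongrightarrow> 0) at_top" by real_asymp
  have c: "((\<lambda>u::real. u\<^sup>2 * exp (- u)) \<longlongrightarrow> 0) at_top" by real_asymp
  have "((\<lambda>u. exp (- u) + 2 * p1 * (u * exp (- u)) + 2 * p2 * (u\<^sup>2 * exp (- u))) \<longlongrightarrow> 0 + 2 * p1 * 0 + 2 * p2 * 0) at_top"
    by (intro tendsto_intros a b c)
  moreover have "(\<lambda>u. exp (- u) + 2 * p1 * (u * exp (- u)) + 2 * p2 * (u\<^sup>2 * exp (- u))) = Tf p1 p2"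
    by (auto simp: Tf_def algebra_simps)
  ultimately show ?thesis by simp
qed

lemma int_G:
  assumes "p1 \<ge> 0" "p2 \<ge> 0" and nn: "\<And>u. u \<ge> 0 \<Longrightarrow> Gf p1 p2 u \<ge> 0"
  shows "(\<integral>\<^sup>+u. ennreal (Gf p1 p2 u) * indicator {0..} u \<partial>lborel) = 1"
proof -
  have d: "DERIV (\<lambda>u. - Tf p1 p2 u) x :> Gf p1 p2 x" for x
    using DERIV_minus[OF DERIV_Tf[of p1 p2 x]] by simp
  have l: "((\<lambda>u. - Tf p1 p2 u) \<longlongrightarrow> 0) at_top"
    using tendsto_minus[OF Tf_lim[of p1 p2]] by simp
  show ?thesis
    using nn_integral_FTC_atLeast[where F="\<lambda>u. - Tf p1 p2 u" and f="Gf p1 p2" and a=0 and T=0, OF _ d nn l]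
    by (simp add: Tf_0)
qed

lemma int_Psi:
  assumes p: "p1 \<ge> 0" "p2 \<ge> 0" and nn: "\<And>u. u \<ge> 0 \<Longrightarrow> Gf p1 p2 u \<ge> 0" and s: "s > 0"
  shows "(\<integral>\<^sup>+u. ennreal (max 0 (1 - s / Tf p1 p2 u) * Gf p1 p2 u) * indicator {0..} u \<partial>lborel)
     = ennreal (s * ln s - s + Phi s 1)"
proof -
  have d: "DERIV (\<lambda>u. - Phi s (Tf p1 p2 u)) x :> max 0 (1 - s / Tf p1 p2 x) * Gf p1 p2 x" if x: "0 \<le> x" for x
  proof -
    have "DERIV (\<lambda>u. Phi s (Tf p1 p2 u)) x :> max 0 (1 - s / Tf p1 p2 x) * (- Gf p1 p2 x)"
      by (rule DERIV_chain2[OF DERIV_Phi[OF s Tf_pos[OF p x]] DERIV_Tf])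
    from DERIV_minus[OF this] show ?thesis by simp
  qed
  have f: "(\<lambda>u. max 0 (1 - s / Tf p1 p2 u) * Gf p1 p2 u) \<in> borel_measurable borel"
    by measurable
  have ev: "eventually (\<lambda>u. Tf p1 p2 u < s) at_top"
    using order_tendstoD(2)[OF Tf_lim s] .
  have l: "((\<lambda>u. - Phi s (Tf p1 p2 u)) \<longlongrightarrow> - (s - s * ln s)) at_top"
    by (rule tendsto_eventually) (use ev in \<open>auto elim!: eventually_mono simp: Phi_def\<close>)
  have nn2: "0 \<le> max 0 (1 - s / Tf p1 p2 u) * Gf p1 p2 u" if "0 \<le> u" for u
    using nn[OF that] by simp
  show ?thesis
    using nn_integral_FTC_atLeast[where F="\<lambda>u. - Phi s (Tf p1 p2 u)" and a=0, OF f d nn2 l]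
    by (simp add: Tf_0)
qed

lemma pw:
  assumes p: "p1 \<ge> 0" "p2 \<ge> 0" and u: "u \<ge> 0" and g: "Gf p1 p2 u \<ge> 0" and s: "s > 0"
  shows "max (Gf p1 p2 u - s) 0 \<le> max 0 (1 - s / Tf p1 p2 u) * Gf p1 p2 u"
proof -
  have T: "Tf p1 p2 u > 0" using Tf_pos[OF p u] .
  have GT: "Gf p1 p2 u \<le> Tf p1 p2 u" using Gf_le_Tf[OF p u] .
  show ?thesis
  proof (cases "Gf p1 p2 u \<le> s")
    case True
    then show ?thesis using g by simp
  next
    case False
    have "s * Gf p1 p2 u / Tf p1 p2 u \<le> s"
      using T GT s g by (simp add: divide_le_eq mult_left_mono)
    then have "Gf p1 p2 u - s \<le> (1 - s / Tf p1 p2 u) * Gf p1 p2 u"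
      by (simp add: algebra_simps)
    then show ?thesis using False g
      by (smt (verit) mult_right_mono)
  qed
qed

lemma pw0:
  assumes s: "s > 0"
  shows "max (Gf 0 0 u - s) 0 = max 0 (1 - s / Tf 0 0 u) * Gf 0 0 u"
proof -
  have T: "Tf 0 0 u > 0" by (simp add: Tf_def)
  have e: "(1 - s / Tf 0 0 u) * Tf 0 0 u = Tf 0 0 u - s"
    using T by (simp add: field_simps)
  have "max (Tf 0 0 u - s) 0 = max 0 (1 - s / Tf 0 0 u) * Tf 0 0 u"
  proof (cases "s \<le> Tf 0 0 u")
    case True
    then have "0 \<le> 1 - s / Tf 0 0 u" using T by (simp add: field_simps)
    then show ?thesis using True e by simp
  next
    case False
    then have "1 - s / Tf 0 0 u \<le> 0" using T by (simp add: field_simps)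
    then show ?thesis using False by simp
  qed
  then show ?thesis by (simp add: G00)
qed

lemma nn2D:
  fixes f :: "real \<Rightarrow> real"
  assumes [measurable]: "f \<in> borel_measurable borel" and t: "t \<ge> 0"
  shows "(\<integral>\<^sup>+z. ennreal (max ((1 / pi) * f (S2 z) - t) 0) \<partial>lborel)
       = (\<integral>\<^sup>+u. ennreal (max (f u - pi * t) 0) * indicator {0..} u \<partial>lborel)"
proof -
  have "(\<integral>\<^sup>+z. ennreal (max ((1 / pi) * f (S2 z) - t) 0) \<partial>lborel)
      = (\<integral>\<^sup>+u. ennreal pi * indicator {0..} u * ennreal (max ((1 / pi) * f u - t) 0) \<partial>lborel)"
    by (rule nn_radial[where g="\<lambda>u. ennreal (max ((1 / pi) * f u - t) 0)"]) measurable
  also have "\<dots> = (\<integral>\<^sup>+u. ennreal (max (f u - pi * t) 0) * indicator {0..} u \<partial>lborel)"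
  proof (rule nn_integral_cong)
    fix u :: real
    have "pi * max ((1 / pi) * f u - t) 0 = max (f u - pi * t) 0"
      by (simp add: max_def field_simps)
    then have "ennreal pi * ennreal (max ((1 / pi) * f u - t) 0) = ennreal (max (f u - pi * t) 0)"
      by (simp add: ennreal_mult[symmetric])
    then show "ennreal pi * indicator {0..} u * ennreal (max ((1 / pi) * f u - t) 0) = ennreal (max (f u - pi * t) 0) * indicator {0..} u"
      by (simp add: mult_ac split: split_indicator)
  qed
  finally show ?thesis .
qed

lemma S2_sqrt: "u \<ge> 0 \<Longrightarrow> S2 (sqrt u, 0) = u"
  by (simp add: S2_def)

lemma plus_tail:
  assumes p: "p1 \<ge> 0" "p2 \<ge> 0" and nn: "\<And>u. u \<ge> 0 \<Longrightarrow> Gf p1 p2 u \<ge> 0" and t: "t > 0"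
  shows "(\<integral>\<^sup>+z. ennreal (max (Wmix p1 p2 z - t) 0) \<partial>lborel)
        \<le> ennreal (pi * t * ln (pi * t) - pi * t + Phi (pi * t) 1)"
proof -
  have s: "pi * t > 0" using t by simp
  have "(\<integral>\<^sup>+z. ennreal (max (Wmix p1 p2 z - t) 0) \<partial>lborel)
      = (\<integral>\<^sup>+u. ennreal (max (Gf p1 p2 u - pi * t) 0) * indicator {0..} u \<partial>lborel)"
    unfolding Wmix_eq using t by (intro nn2D) auto
  also have "\<dots> \<le> (\<integral>\<^sup>+u. ennreal (max 0 (1 - (pi * t) / Tf p1 p2 u) * Gf p1 p2 u) * indicator {0..} u \<partial>lborel)"
    by (intro nn_integral_mono) (auto split: split_indicator intro!: ennreal_leI pw[OF p _ nn s])
  also have "\<dots> = ennreal (pi * t * ln (pi * t) - pi * t + Phi (pi * t) 1)"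
    by (rule int_Psi[OF p nn s])
  finally show ?thesis .
qed

lemma plus_tail0:
  assumes t: "t > 0"
  shows "(\<integral>\<^sup>+z. ennreal (max (W0 z - t) 0) \<partial>lborel)
        = ennreal (pi * t * ln (pi * t) - pi * t + Phi (pi * t) 1)"
proof -
  have s: "pi * t > 0" using t by simp
  have nn: "\<And>u. u \<ge> 0 \<Longrightarrow> Gf 0 0 u \<ge> 0" by (simp add: Gf_def qf_def)
  have "(\<integral>\<^sup>+z. ennreal (max (W0 z - t) 0) \<partial>lborel)
      = (\<integral>\<^sup>+u. ennreal (max (Gf 0 0 u - pi * t) 0) * indicator {0..} u \<partial>lborel)"
    unfolding W0_eq using t by (intro nn2D) auto
  also have "\<dots> = (\<integral>\<^sup>+u. ennreal (max 0 (1 - (pi * t) / Tf 0 0 u) * Gf 0 0 u) * indicator {0..} u \<partial>lborel)"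
    by (intro nn_integral_cong) (simp add: pw0[OF s])
  also have "\<dots> = ennreal (pi * t * ln (pi * t) - pi * t + Phi (pi * t) 1)"
    by (rule int_Psi[OF _ _ nn s]) auto
  finally show ?thesis .
qed

lemma total_int:
  assumes p: "p1 \<ge> 0" "p2 \<ge> 0" and nn: "\<And>u. u \<ge> 0 \<Longrightarrow> Gf p1 p2 u \<ge> 0"
    and nnz: "\<And>z. Wmix p1 p2 z \<ge> 0"
  shows "has_bochner_integral lborel (Wmix p1 p2) 1"
proof (rule has_bochner_integral_nn_integral)
  show "Wmix p1 p2 \<in> borel_measurable lborel"
    unfolding Wmix_eq[abs_def] by measurable
  show "AE x in lborel. 0 \<le> Wmix p1 p2 x" using nnz by simp
  have "(\<integral>\<^sup>+z. ennreal (Wmix p1 p2 z) \<partial>lborel) = (\<integral>\<^sup>+z. ennreal (max ((1 / pi) * Gf p1 p2 (S2 z) - 0) 0) \<partial>lborel)"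
  proof (intro nn_integral_cong)
    fix z
    have e: "(1 / pi) * Gf p1 p2 (S2 z) - 0 = Wmix p1 p2 z" by (simp add: Wmix_eq)
    show "ennreal (Wmix p1 p2 z) = ennreal (max ((1 / pi) * Gf p1 p2 (S2 z) - 0) 0)"
      unfolding e using nnz[of z] by simp
  qed
  also have "\<dots> = (\<integral>\<^sup>+u. ennreal (max (Gf p1 p2 u - pi * 0) 0) * indicator {0..} u \<partial>lborel)"
    by (rule nn2D) auto
  also have "\<dots> = (\<integral>\<^sup>+u. ennreal (Gf p1 p2 u) * indicator {0..} u \<partial>lborel)"
    by (intro nn_integral_cong) (simp split: split_indicator add: nn max_absorb1)
  also have "\<dots> = 1" by (rule int_G[OF p nn])
  finally show "(\<integral>\<^sup>+z. ennreal (Wmix p1 p2 z) \<partial>lborel) = ennreal 1" by simp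
qed simp

lemma W0_Wmix: "W0 = Wmix 0 0"
  by (auto simp: W0_eq Wmix_eq)

theorem mainTheorem1:
  fixes p1 p2 :: real
  assumes "p1 \<ge> 0" and "p2 \<ge> 0" and "p1 + p2 \<le> 1"
    and "\<forall>x p. Wmix p1 p2 (x, p) \<ge> 0"
  shows "majorizes W0 (Wmix p1 p2)"
proof -
  have p: "p1 \<ge> 0" "p2 \<ge> 0" by fact+
  have nnz: "\<And>z. Wmix p1 p2 z \<ge> 0" using assms(4) by (metis prod.collapse)
  have nn: "Gf p1 p2 u \<ge> 0" if "u \<ge> 0" for u
  proof -
    have "0 \<le> Wmix p1 p2 (sqrt u, 0)" using nnz .
    then have "0 \<le> (1 / pi) * Gf p1 p2 u" by (simp add: Wmix_eq S2_sqrt[OF that])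
    then show ?thesis using pi_gt_zero by (auto simp: zero_le_divide_iff)
  qed
  have nn0: "\<And>u. u \<ge> 0 \<Longrightarrow> Gf 0 0 u \<ge> 0" by (simp add: Gf_def qf_def)
  have nnz0: "\<And>z. W0 z \<ge> 0" by (simp add: W0_eq Gf_def qf_def)
  have hb: "has_bochner_integral lborel (Wmix p1 p2) 1" by (rule total_int[OF p nn nnz])
  have hb0: "has_bochner_integral lborel W0 1"
    unfolding W0_Wmix by (rule total_int) (use nn0 nnz0 in \<open>auto simp: W0_Wmix\<close>)
  have tails: "integral\<^sup>L lborel (\<lambda>z. max (W0 z - t) 0) \<ge> integral\<^sup>L lborel (\<lambda>z. max (Wmix p1 p2 z - t) 0)"
    if t: "t \<ge> 0" for t :: real
  proof (cases "t = 0")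
    case True
    have "(\<lambda>z. max (W0 z - t) 0) = W0" by (intro ext) (simp add: True max_absorb1 nnz0)
    moreover have "(\<lambda>z. max (Wmix p1 p2 z - t) 0) = Wmix p1 p2" by (intro ext) (simp add: True max_absorb1 nnz)
    ultimately show ?thesis using hb hb0 by (simp add: has_bochner_integral_integral_eq)
  next
    case False
    then have t: "t > 0" using t by simp
    define c where "c = pi * t * ln (pi * t) - pi * t + Phi (pi * t) 1"
    have m1: "(\<lambda>z. max (Wmix p1 p2 z - t) 0) \<in> borel_measurable lborel"
      unfolding Wmix_eq by measurable
    have m0: "(\<lambda>z. max (W0 z - t) 0) \<in> borel_measurable lborel"
      unfolding W0_eq by measurable
    have e0: "integral\<^sup>L lborel (\<lambda>z. max (W0 z - t) 0) = enn2real (ennreal c)"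
      using integral_eq_nn_integral[OF m0] plus_tail0[OF t] by (simp add: c_def)
    have e1: "integral\<^sup>L lborel (\<lambda>z. max (Wmix p1 p2 z - t) 0)
        = enn2real (\<integral>\<^sup>+z. ennreal (max (Wmix p1 p2 z - t) 0) \<partial>lborel)"
      using integral_eq_nn_integral[OF m1] by simp
    show ?thesis unfolding e0 e1
      by (rule enn2real_mono) (use plus_tail[OF p nn t] in \<open>auto simp: c_def\<close>)
  qed
  show ?thesis unfolding majorizes_def
  proof (intro conjI allI impI)
    show "integrable lborel W0" using hb0 by (auto simp: has_bochner_integral_iff)
    show "integrable lborel (Wmix p1 p2)" using hb by (auto simp: has_bochner_integral_iff)
    show "integral\<^sup>L lborel W0 = integral\<^sup>L lborel (Wmix p1 p2)"
      using hb hb0 by (simp add: has_bochner_integral_integral_eq)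
  qed (use nnz nnz0 tails in auto)
qed

end
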